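(* Let $R$ be an integral domain. Then the image $\overline{\mathbf{U}_4(R)}=\mathbf{U}_4(R)/\mathbf{U}_4(R)'$ is a characteristic subgroup of $\overline{\mathbf{A}_4(R)}=\mathbf{A}_4(R)/\mathbf{U}_4(R)'$.
   Context: $\mathbf{A}_4(R)$ is the group of upper triangular $4\times4$ matrices over $R$ whose diagonal has the form $(1,u_2,u_3,1)$ with $u_2,u_3\in U(R)$. $\mathbf{U}_4(R)$ is its normal subgroup of upper unitriangular matrices and $\mathbf{U}_4(R)'=[\mathbf{U}_4(R),\mathbf{U}_4(R)]$. *)

theory Defs
  imports "HOL-Algebra.Algebra"
begin

text \<open>4x4 matrices over R, represented as functions nat => nat => R with indices 0..3
  (entries outside the index range are required to be 0 in the carriers below).\<close>

definition mat4_mult :: "(nat \<Rightarrow> nat \<Rightarrow> 'a::comm_ring_1) \<Rightarrow> (nat \<Rightarrow> nat \<Rightarrow> 'a) \<Rightarrow> (nat \<Rightarrow> nat \<Rightarrow> 'a)" where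
  "mat4_mult A B = (\<lambda>i j. if i < 4 \<and> j < 4 then (\<Sum>k<4. A i k * B k j) else 0)"

definition mat4_one :: "nat \<Rightarrow> nat \<Rightarrow> 'a::comm_ring_1" where
  "mat4_one = (\<lambda>i j. if i < 4 \<and> i = j then 1 else 0)"

definition A4_carrier :: "(nat \<Rightarrow> nat \<Rightarrow> 'a::comm_ring_1) set" where
  "A4_carrier = {M. (\<forall>i j. \<not> (i < 4 \<and> j < 4) \<longrightarrow> M i j = 0)
                  \<and> (\<forall>i j. j < i \<longrightarrow> M i j = 0)
                  \<and> M 0 0 = 1 \<and> M 3 3 = 1 \<and> M 1 1 dvd 1 \<and> M 2 2 dvd 1}"

definition U4_carrier :: "(nat \<Rightarrow> nat \<Rightarrow> 'a::comm_ring_1) set" where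
  "U4_carrier = {M. (\<forall>i j. \<not> (i < 4 \<and> j < 4) \<longrightarrow> M i j = 0)
                  \<and> (\<forall>i j. j < i \<longrightarrow> M i j = 0)
                  \<and> (\<forall>i < 4. M i i = 1)}"

definition A4 :: "(nat \<Rightarrow> nat \<Rightarrow> 'a::comm_ring_1) monoid" where
  "A4 = \<lparr>carrier = A4_carrier, monoid.mult = mat4_mult, one = mat4_one\<rparr>"

definition U4 :: "(nat \<Rightarrow> nat \<Rightarrow> 'a::comm_ring_1) monoid" where
  "U4 = \<lparr>carrier = U4_carrier, monoid.mult = mat4_mult, one = mat4_one\<rparr>"

definition characteristic_subgroup :: "'a set \<Rightarrow> ('a, 'b) monoid_scheme \<Rightarrow> bool" where
  "characteristic_subgroup H G \<longleftrightarrow> subgroup H G \<and> (\<forall>\<phi> \<in> iso G G. \<phi> ` H = H)"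

end

theory Submission
  imports Defs
begin


definition ut :: "(nat \<Rightarrow> nat \<Rightarrow> 'a::comm_ring_1) \<Rightarrow> bool" where
  "ut M \<longleftrightarrow> (\<forall>i j. \<not> (i < 4 \<and> j < 4) \<longrightarrow> M i j = 0) \<and> (\<forall>i j. j < i \<longrightarrow> M i j = 0)"

lemma sum4: "(\<Sum>k<4. (f::nat\<Rightarrow>_) k) = f 0 + f 1 + f 2 + (f 3 :: 'a::comm_monoid_add)"
  by (simp add: eval_nat_numeral add.assoc)

lemma utD: "ut M \<Longrightarrow> M 1 0 = 0" "ut M \<Longrightarrow> M 2 0 = 0" "ut M \<Longrightarrow> M 3 0 = 0"
  "ut M \<Longrightarrow> M 2 1 = 0" "ut M \<Longrightarrow> M 3 1 = 0" "ut M \<Longrightarrow> M 3 2 = 0"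
  by (auto simp: ut_def)

lemma ut_mult: assumes "ut A" "ut B" shows "ut (mat4_mult A B)"
  unfolding ut_def
proof (intro conjI allI impI)
  fix i j :: nat assume "\<not> (i < 4 \<and> j < 4)" thus "mat4_mult A B i j = 0" by (auto simp add: mat4_mult_def)
next
  fix i j :: nat assume ji: "j < i"
  have "\<And>k. A i k * B k j = 0"
  proof -
    fix k show "A i k * B k j = 0"
      using assms ji unfolding ut_def by (cases "k < i") auto
  qed
  thus "mat4_mult A B i j = 0" by (simp add: mat4_mult_def)
qed

lemma mult_diag: assumes "ut A" "ut B" "i < 4"
  shows "mat4_mult A B i i = A i i * B i i"
proof -
  have "i = 0 \<or> i = 1 \<or> i = 2 \<or> i = 3" using assms(3) by auto
  thus ?thesis using utD[OF assms(1)] utD[OF assms(2)]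
    by (auto simp: mat4_mult_def sum4)
qed

lemma mult_sup: assumes "ut A" "ut B"
  shows "mat4_mult A B 0 1 = A 0 0 * B 0 1 + A 0 1 * B 1 1"
    "mat4_mult A B 1 2 = A 1 1 * B 1 2 + A 1 2 * B 2 2"
    "mat4_mult A B 2 3 = A 2 2 * B 2 3 + A 2 3 * B 3 3"
  using utD[OF assms(1)] utD[OF assms(2)] by (auto simp: mat4_mult_def sum4)

lemma mat4_assoc: "mat4_mult (mat4_mult A B) C = mat4_mult A (mat4_mult B C)"
proof (intro ext)
  fix i j
  show "mat4_mult (mat4_mult A B) C i j = mat4_mult A (mat4_mult B C) i j"
    by (simp add: mat4_mult_def sum4 algebra_simps)
qed

lemma A4_ut: "M \<in> A4_carrier \<Longrightarrow> ut M" by (simp add: A4_carrier_def ut_def)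
lemma U4_ut: "M \<in> U4_carrier \<Longrightarrow> ut M" by (simp add: U4_carrier_def ut_def)
lemma U4_A4: "U4_carrier \<subseteq> A4_carrier" by (auto simp: U4_carrier_def A4_carrier_def)

lemma A4_iff: "M \<in> A4_carrier \<longleftrightarrow> ut M \<and> M 0 0 = 1 \<and> M 3 3 = 1 \<and> M 1 1 dvd 1 \<and> M 2 2 dvd 1"
  by (simp add: A4_carrier_def ut_def)
lemma U4_iff: "M \<in> U4_carrier \<longleftrightarrow> ut M \<and> M 0 0 = 1 \<and> M 1 1 = 1 \<and> M 2 2 = 1 \<and> M 3 3 = 1"
proof -
  have "(\<forall>i<4. M i i = 1) \<longleftrightarrow> M 0 0 = 1 \<and> M 1 1 = 1 \<and> M 2 2 = 1 \<and> M 3 3 = 1"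
    by (auto simp: less_Suc_eq eval_nat_numeral)
  thus ?thesis by (simp add: U4_carrier_def ut_def)
qed

lemma A4_closed: "A \<in> A4_carrier \<Longrightarrow> B \<in> A4_carrier \<Longrightarrow> mat4_mult A B \<in> A4_carrier"
  using mult_dvd_mono[of _ 1 _ 1] by (auto simp add: A4_iff ut_mult mult_diag)

lemma U4_closed: "A \<in> U4_carrier \<Longrightarrow> B \<in> U4_carrier \<Longrightarrow> mat4_mult A B \<in> U4_carrier"
  by (simp add: U4_iff ut_mult mult_diag)

lemma one_ut: "ut mat4_one" by (auto simp: ut_def mat4_one_def)
lemma one_U4: "mat4_one \<in> U4_carrier" by (simp add: U4_iff one_ut) (simp add: mat4_one_def)

lemma one_mult: "ut M \<Longrightarrow> mat4_mult mat4_one M = M"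
proof (intro ext)
  fix i j assume "ut M"
  show "mat4_mult mat4_one M i j = M i j"
  proof (cases "i < 4 \<and> j < 4")
    case True
    have "(\<Sum>k<4. mat4_one i k * M k j) = (\<Sum>k\<in>{i}. mat4_one i k * M k j)"
      by (rule sum.mono_neutral_right) (use True in \<open>auto simp: mat4_one_def\<close>)
    then show ?thesis using True by (simp add: mat4_mult_def mat4_one_def)
  next
    case False then show ?thesis using \<open>ut M\<close> by (auto simp add: mat4_mult_def ut_def)
  qed
qed

lemma inv_ex: assumes a: "a \<in> A4_carrier" shows "\<exists>N\<in>A4_carrier. mat4_mult N a = mat4_one"
proof -
  have au: "ut a" and a0: "a 0 0 = 1" and a3: "a 3 3 = 1" and "a 1 1 dvd 1" "a 2 2 dvd 1" using a by (auto simp: A4_iff)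
  then obtain u' v' where u: "u' * a 1 1 = 1" and v: "v' * a 2 2 = 1"
    by (metis dvdE mult.commute)
  note z = utD[OF au]
  define N01 where "N01 = - a 0 1 * u'"
  define N02 where "N02 = - (a 0 2 + N01 * a 1 2) * v'"
  define N03 where "N03 = - (a 0 3 + N01 * a 1 3 + N02 * a 2 3)"
  define N12 where "N12 = - u' * a 1 2 * v'"
  define N13 where "N13 = - (u' * a 1 3 + N12 * a 2 3)"
  define N23 where "N23 = - v' * a 2 3"
  define N where "N = (\<lambda>(i::nat) (j::nat). if i = 0 \<and> j = 0 then 1 else if i = 0 \<and> j = 1 then N01
     else if i = 0 \<and> j = 2 then N02 else if i = 0 \<and> j = 3 then N03
     else if i = 1 \<and> j = 1 then u' else if i = 1 \<and> j = 2 then N12 else if i = 1 \<and> j = 3 then N13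
     else if i = 2 \<and> j = 2 then v' else if i = 2 \<and> j = 3 then N23 else if i = 3 \<and> j = 3 then 1 else (0::'a))"
  have NA: "N \<in> A4_carrier"
    unfolding A4_carrier_def N_def using u v by (auto intro: dvdI simp: mult.commute)
  have "mat4_mult N a i j = mat4_one i j" for i j
  proof (cases "i < 4 \<and> j < 4")
    case True
    then have "i = 0 \<or> i = 1 \<or> i = 2 \<or> i = 3" "j = 0 \<or> j = 1 \<or> j = 2 \<or> j = 3" by auto
    then show ?thesis using u v z a0 a3
      by (elim disjE; simp add: mat4_mult_def mat4_one_def sum4 N_def N01_def N02_def N03_def N12_def N13_def N23_def; (simp add: mult.assoc)?; simp add: algebra_simps)
  next
    case False then show ?thesis by (auto simp: mat4_mult_def mat4_one_def)
  qed
  then show ?thesis using NA by blast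
qed

lemma group_A4: "group (A4 :: (nat \<Rightarrow> nat \<Rightarrow> 'a::comm_ring_1) monoid)"
proof (rule groupI)
  show "\<exists>y\<in>carrier A4. y \<otimes>\<^bsub>A4\<^esub> x = \<one>\<^bsub>A4\<^esub>" if "x \<in> carrier (A4::(nat \<Rightarrow> nat \<Rightarrow> 'a) monoid)" for x
    using inv_ex[of x] that by (simp add: A4_def)
  show "x \<otimes>\<^bsub>A4\<^esub> y \<in> carrier A4" if "x \<in> carrier (A4::(nat \<Rightarrow> nat \<Rightarrow> 'a) monoid)" "y \<in> carrier A4" for x y
    using A4_closed[of x y] that by (simp add: A4_def)
  show "\<one>\<^bsub>A4\<^esub> \<in> carrier (A4::(nat \<Rightarrow> nat \<Rightarrow> 'a) monoid)"
    using one_U4 U4_A4 by (auto simp add: A4_def)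
  show "x \<otimes>\<^bsub>A4\<^esub> y \<otimes>\<^bsub>A4\<^esub> z = x \<otimes>\<^bsub>A4\<^esub> (y \<otimes>\<^bsub>A4\<^esub> z)" for x y z :: "nat \<Rightarrow> nat \<Rightarrow> 'a"
    by (simp add: A4_def mat4_assoc)
  show "\<one>\<^bsub>A4\<^esub> \<otimes>\<^bsub>A4\<^esub> x = x" if "x \<in> carrier (A4::(nat \<Rightarrow> nat \<Rightarrow> 'a) monoid)" for x
    using one_mult[OF A4_ut[of x]] that by (simp add: A4_def)
qed



lemma A4_simps [simp]: "carrier A4 = A4_carrier" "monoid.mult A4 = mat4_mult" "one A4 = mat4_one"
  by (simp_all add: A4_def)

lemma U4_eq: "U4 = A4\<lparr>carrier := U4_carrier\<rparr>" by (simp add: U4_def A4_def)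

lemma A4_inv: fixes a :: "nat \<Rightarrow> nat \<Rightarrow> 'a::comm_ring_1"
  assumes "a \<in> A4_carrier"
  shows "inv\<^bsub>A4\<^esub> a \<in> A4_carrier" "mat4_mult a (inv\<^bsub>A4\<^esub> a) = mat4_one" "mat4_mult (inv\<^bsub>A4\<^esub> a) a = mat4_one"
  using group.inv_closed[OF group_A4, of a] group.r_inv[OF group_A4, of a] group.l_inv[OF group_A4, of a] assms
  by auto

lemma one_entries: "mat4_one 0 0 = 1" "mat4_one 1 1 = 1" "mat4_one 2 2 = 1" "mat4_one 3 3 = 1"
  "mat4_one 0 1 = 0" "mat4_one 1 2 = 0" "mat4_one 2 3 = 0"
  by (simp_all add: mat4_one_def)

lemma U4_inv: fixes a :: "nat \<Rightarrow> nat \<Rightarrow> 'a::comm_ring_1"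
  assumes a: "a \<in> U4_carrier"
  shows "inv\<^bsub>A4\<^esub> a \<in> U4_carrier" "(inv\<^bsub>A4\<^esub> a) 0 1 = - a 0 1" "(inv\<^bsub>A4\<^esub> a) 1 2 = - a 1 2" "(inv\<^bsub>A4\<^esub> a) 2 3 = - a 2 3"
proof -
  define b where "b = inv\<^bsub>A4\<^esub> a"
  have aA: "a \<in> A4_carrier" using a U4_A4 by auto
  have bA: "b \<in> A4_carrier" and ab: "mat4_mult a b = mat4_one" using A4_inv[OF aA] by (auto simp: b_def)
  have ua: "ut a" and ub: "ut b" using aA bA A4_ut by auto
  have ad: "a 0 0 = 1" "a 1 1 = 1" "a 2 2 = 1" "a 3 3 = 1" using a by (auto simp: U4_iff)
  have "mat4_mult a b i i = mat4_one i i" for i using ab by simp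
  then have bd: "b i i = 1" if "i < 4" "a i i = 1" for i
    using mult_diag[OF ua ub that(1)] that by (simp add: mat4_one_def)
  have bd': "b 0 0 = 1" "b 1 1 = 1" "b 2 2 = 1" "b 3 3 = 1" using bd ad by auto
  then show "inv\<^bsub>A4\<^esub> a \<in> U4_carrier" using ub by (simp add: U4_iff b_def)
  have "mat4_mult a b 0 1 = mat4_one 0 1" "mat4_mult a b 1 2 = mat4_one 1 2" "mat4_mult a b 2 3 = mat4_one 2 3"
    using ab by simp_all
  then have "b 0 1 + a 0 1 = 0" "b 1 2 + a 1 2 = 0" "b 2 3 + a 2 3 = 0"
    unfolding mult_sup[OF ua ub] one_entries using ad bd' by simp_all
  then show "(inv\<^bsub>A4\<^esub> a) 0 1 = - a 0 1" "(inv\<^bsub>A4\<^esub> a) 1 2 = - a 1 2" "(inv\<^bsub>A4\<^esub> a) 2 3 = - a 2 3"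
    unfolding b_def[symmetric] by (simp_all add: eq_neg_iff_add_eq_0)
qed

lemma subgroup_U4: "subgroup U4_carrier (A4 :: (nat \<Rightarrow> nat \<Rightarrow> 'a::comm_ring_1) monoid)"
  by (rule group.subgroupI[OF group_A4]) (use U4_A4 one_U4 U4_inv U4_closed in auto)

lemma normal_U4: "U4_carrier \<lhd> (A4 :: (nat \<Rightarrow> nat \<Rightarrow> 'a::comm_ring_1) monoid)"
  unfolding group.normal_inv_iff[OF group_A4]
proof (intro conjI subgroup_U4 ballI)
  fix x h :: "nat \<Rightarrow> nat \<Rightarrow> 'a" assume x: "x \<in> carrier A4" and h: "h \<in> U4_carrier"
  define y where "y = inv\<^bsub>A4\<^esub> x"
  have xA: "x \<in> A4_carrier" using x by simp
  have yA: "y \<in> A4_carrier" and xy: "mat4_mult x y = mat4_one" using A4_inv[OF xA] by (auto simp: y_def)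
  have hA: "h \<in> A4_carrier" using h U4_A4 by auto
  have u: "ut x" "ut y" "ut h" "ut (mat4_mult x h)" using xA yA hA A4_ut ut_mult by blast+
  have hd: "h i i = 1" if "i < 4" for i using h that by (simp add: U4_carrier_def)
  have "mat4_mult (mat4_mult x h) y i i = 1" if "i < 4" for i
  proof -
    have "mat4_mult (mat4_mult x h) y i i = x i i * y i i"
      using mult_diag[OF u(4) u(2) that] mult_diag[OF u(1) u(3) that] hd[OF that] by simp
    also have "\<dots> = 1" using mult_diag[OF u(1) u(2) that] xy that by (simp add: mat4_one_def)
    finally show ?thesis .
  qed
  then show "x \<otimes>\<^bsub>A4\<^esub> h \<otimes>\<^bsub>A4\<^esub> inv\<^bsub>A4\<^esub> x \<in> U4_carrier"
    using u ut_mult[OF u(4) u(2)] by (simp add: U4_carrier_def ut_def y_def[symmetric])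
qed

definition SS :: "(nat \<Rightarrow> nat \<Rightarrow> 'a::comm_ring_1) set" where
  "SS = {M \<in> U4_carrier. M 0 1 = 0 \<and> M 1 2 = 0 \<and> M 2 3 = 0}"

lemma U4_sup: assumes "A \<in> U4_carrier" "B \<in> U4_carrier"
  shows "mat4_mult A B 0 1 = A 0 1 + B 0 1" "mat4_mult A B 1 2 = A 1 2 + B 1 2" "mat4_mult A B 2 3 = A 2 3 + B 2 3"
  using mult_sup[OF U4_ut[OF assms(1)] U4_ut[OF assms(2)]] assms by (simp_all add: U4_iff)

lemma subgroup_SS: "subgroup SS (A4 :: (nat \<Rightarrow> nat \<Rightarrow> 'a::comm_ring_1) monoid)"
proof (rule group.subgroupI[OF group_A4])
  show "SS \<subseteq> carrier (A4 :: (nat \<Rightarrow> nat \<Rightarrow> 'a::comm_ring_1) monoid)" using U4_A4 by (auto simp: SS_def)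
  have "mat4_one \<in> (SS :: (nat \<Rightarrow> nat \<Rightarrow> 'a::comm_ring_1) set)" using one_U4 one_entries by (simp add: SS_def)
  then show "(SS :: (nat \<Rightarrow> nat \<Rightarrow> 'a::comm_ring_1) set) \<noteq> {}" by blast
  show "inv\<^bsub>A4\<^esub> a \<in> SS" if "a \<in> SS" for a :: "nat \<Rightarrow> nat \<Rightarrow> 'a"
    using that U4_inv[of a] by (simp add: SS_def)
  show "a \<otimes>\<^bsub>A4\<^esub> b \<in> SS" if "a \<in> SS" "b \<in> SS" for a b :: "nat \<Rightarrow> nat \<Rightarrow> 'a"
    using that U4_sup[of a b] U4_closed[of a b] by (simp add: SS_def)
qed

definition HH :: "(nat \<Rightarrow> nat \<Rightarrow> 'a::comm_ring_1) set" where
  "HH = derived A4 U4_carrier"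

lemma HH_eq: "derived U4 (carrier U4) = (HH :: (nat \<Rightarrow> nat \<Rightarrow> 'a::comm_ring_1) set)"
  unfolding HH_def U4_eq using group.derived_consistent[OF group_A4 _ subgroup_U4, of U4_carrier] by simp

lemma HH_normal: "(HH :: (nat \<Rightarrow> nat \<Rightarrow> 'a::comm_ring_1) set) \<lhd> A4"
  unfolding HH_def by (rule group.derived_is_normal[OF group_A4 normal_U4])

lemma HH_SS: "(HH :: (nat \<Rightarrow> nat \<Rightarrow> 'a::comm_ring_1) set) \<subseteq> SS"
  unfolding HH_def derived_def
proof (rule group.generate_subgroup_incl[OF group_A4 _ subgroup_SS])
  show "derived_set A4 U4_carrier \<subseteq> (SS :: (nat \<Rightarrow> nat \<Rightarrow> 'a::comm_ring_1) set)"
  proof (clarsimp)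
    fix u w :: "nat \<Rightarrow> nat \<Rightarrow> 'a" assume u: "u \<in> U4_carrier" and w: "w \<in> U4_carrier"
    have iu: "inv\<^bsub>A4\<^esub> u \<in> U4_carrier" and iw: "inv\<^bsub>A4\<^esub> w \<in> U4_carrier" using U4_inv u w by auto
    show "mat4_mult (mat4_mult (mat4_mult u w) (inv\<^bsub>A4\<^esub> u)) (inv\<^bsub>A4\<^esub> w) \<in> SS"
      using u w iu iw U4_inv[OF u] U4_inv[OF w]
      by (simp add: SS_def U4_closed U4_sup U4_sup[simplified])
  qed
qed

lemma HH_U4: "(HH :: (nat \<Rightarrow> nat \<Rightarrow> 'a::comm_ring_1) set) \<subseteq> U4_carrier"
  using HH_SS by (auto simp: SS_def)

type_synonym 'a mat = "nat \<Rightarrow> nat \<Rightarrow> 'a"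

lemma HH_sub: "subgroup (HH :: 'a::comm_ring_1 mat set) A4"
  using HH_normal normal_imp_subgroup by blast

lemma U4_A4': "M \<in> U4_carrier \<Longrightarrow> M \<in> A4_carrier" using U4_A4 by blast

lemma A4_rules:
  fixes A B :: "'a::comm_ring_1 mat"
  assumes "A \<in> A4_carrier" "B \<in> A4_carrier"
  shows "mat4_mult A B 0 1 = A 0 0 * B 0 1 + A 0 1 * B 1 1"
    "mat4_mult A B 1 2 = A 1 1 * B 1 2 + A 1 2 * B 2 2"
    "mat4_mult A B 2 3 = A 2 2 * B 2 3 + A 2 3 * B 3 3"
    "mat4_mult A B 1 1 = A 1 1 * B 1 1"
    "mat4_mult A B 2 2 = A 2 2 * B 2 2"
  using mult_sup[OF A4_ut[OF assms(1)] A4_ut[OF assms(2)]] mult_diag[OF A4_ut[OF assms(1)] A4_ut[OF assms(2)]]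
  by auto

lemma A4_corner: "A \<in> A4_carrier \<Longrightarrow> A 0 0 = 1" "A \<in> A4_carrier \<Longrightarrow> A 3 3 = 1"
  by (auto simp: A4_iff)

lemma coset_entries:
  fixes a b :: "'a::comm_ring_1 mat"
  assumes a: "a \<in> A4_carrier" and b: "b \<in> A4_carrier" and eq: "HH #>\<^bsub>A4\<^esub> a = HH #>\<^bsub>A4\<^esub> b"
  shows "a 0 1 = b 0 1" "a 2 3 = b 2 3"
proof -
  have "a \<in> HH #>\<^bsub>A4\<^esub> a" using group.rcos_self[OF group_A4 _ HH_sub] a by simp
  then have "a \<in> HH #>\<^bsub>A4\<^esub> b" using eq by simp
  then obtain h where h: "h \<in> HH" and ahb: "a = mat4_mult h b" unfolding r_coset_def by auto
  have hS: "h \<in> SS" using h HH_SS by auto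
  then have hU: "h \<in> U4_carrier" and hz: "h 0 1 = 0" "h 2 3 = 0" by (auto simp: SS_def)
  have hA: "h \<in> A4_carrier" using hU U4_A4 by auto
  have hd: "h 0 0 = 1" "h 2 2 = 1" using hU by (auto simp: U4_iff)
  show "a 0 1 = b 0 1" "a 2 3 = b 2 3" unfolding ahb using A4_rules[OF hA b] hz hd A4_corner[OF b] by simp_all
qed

lemma HH_absorb:
  fixes h x :: "'a::comm_ring_1 mat"
  assumes "h \<in> HH" "x \<in> A4_carrier"
  shows "HH #>\<^bsub>A4\<^esub> (mat4_mult h x) = HH #>\<^bsub>A4\<^esub> x"
proof -
  have hA: "h \<in> A4_carrier" using assms(1) HH_U4 U4_A4 by auto
  have "HH #>\<^bsub>A4\<^esub> (mat4_mult h x) = (HH #>\<^bsub>A4\<^esub> h) #>\<^bsub>A4\<^esub> x"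
    using group.coset_mult_assoc[OF group_A4, of HH h x] hA assms(2) HH_U4 U4_A4 by auto
  also have "HH #>\<^bsub>A4\<^esub> h = HH" using subgroup.rcos_const[OF HH_sub group_A4 assms(1)] .
  finally show ?thesis .
qed

lemma G_group: "group (A4 Mod (HH :: 'a::comm_ring_1 mat set))"
  using normal.factorgroup_is_group[OF HH_normal] .

lemma G_carrier: "carrier (A4 Mod (HH :: 'a::comm_ring_1 mat set)) = (\<lambda>a. HH #>\<^bsub>A4\<^esub> a) ` A4_carrier"
  by (simp add: carrier_FactGroup)

lemma G_mult:
  fixes a b :: "'a::comm_ring_1 mat"
  assumes "a \<in> A4_carrier" "b \<in> A4_carrier"
  shows "(HH #>\<^bsub>A4\<^esub> a) \<otimes>\<^bsub>A4 Mod HH\<^esub> (HH #>\<^bsub>A4\<^esub> b) = HH #>\<^bsub>A4\<^esub> (mat4_mult a b)"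
  using normal.rcos_sum[OF HH_normal, of a b] assms by simp

lemma G_inv:
  fixes a :: "'a::comm_ring_1 mat"
  assumes "a \<in> A4_carrier"
  shows "inv\<^bsub>A4 Mod HH\<^esub> (HH #>\<^bsub>A4\<^esub> a) = HH #>\<^bsub>A4\<^esub> (inv\<^bsub>A4\<^esub> a)"
proof -
  have c: "HH #>\<^bsub>A4\<^esub> a \<in> carrier (A4 Mod HH)" using assms G_carrier by auto
  have "inv\<^bsub>A4 Mod HH\<^esub> (HH #>\<^bsub>A4\<^esub> a) = set_inv\<^bsub>A4\<^esub> (HH #>\<^bsub>A4\<^esub> a)"
    by (rule normal.inv_FactGroup[OF HH_normal c])
  also have "\<dots> = HH #>\<^bsub>A4\<^esub> (inv\<^bsub>A4\<^esub> a)"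
    by (rule normal.rcos_inv[OF HH_normal]) (simp add: assms)
  finally show ?thesis .
qed

lemma G_mult2:
  fixes a b :: "'a::comm_ring_1 mat"
  assumes "a \<in> A4_carrier" "b \<in> A4_carrier"
  shows "(HH #>\<^bsub>A4\<^esub> a) <#>\<^bsub>A4\<^esub> (HH #>\<^bsub>A4\<^esub> b) = HH #>\<^bsub>A4\<^esub> (mat4_mult a b)"
  using normal.rcos_sum[OF HH_normal, of a b] assms by simp

definition KK :: "'a::comm_ring_1 mat set set" where
  "KK = (\<lambda>u. HH #>\<^bsub>A4\<^esub> u) ` U4_carrier"

lemma KK_carrier: "KK \<subseteq> carrier (A4 Mod (HH :: 'a::comm_ring_1 mat set))"
  unfolding KK_def G_carrier using U4_A4 by auto

lemma KK_subgroup: "subgroup (KK :: 'a::comm_ring_1 mat set set) (A4 Mod HH)"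
proof (rule group.subgroupI[OF G_group KK_carrier])
  show "(KK :: 'a::comm_ring_1 mat set set) \<noteq> {}" using one_U4 unfolding KK_def by blast
  show "inv\<^bsub>A4 Mod HH\<^esub> k \<in> KK" if kk: "k \<in> (KK :: 'a::comm_ring_1 mat set set)" for k
  proof -
    obtain u where u: "u \<in> U4_carrier" "k = HH #>\<^bsub>A4\<^esub> u" using kk unfolding KK_def by blast
    have "inv\<^bsub>A4 Mod HH\<^esub> k = HH #>\<^bsub>A4\<^esub> (inv\<^bsub>A4\<^esub> u)" using u by (simp add: G_inv U4_A4')
    then show ?thesis using U4_inv(1)[OF u(1)] by (auto simp: KK_def)
  qed
  show "k \<otimes>\<^bsub>A4 Mod HH\<^esub> l \<in> KK" if kk: "k \<in> (KK :: 'a::comm_ring_1 mat set set)" "l \<in> KK" for k l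
  proof -
    obtain u where u: "u \<in> U4_carrier" "k = HH #>\<^bsub>A4\<^esub> u" using kk unfolding KK_def by blast
    obtain w where w: "w \<in> U4_carrier" "l = HH #>\<^bsub>A4\<^esub> w" using kk unfolding KK_def by blast
    show ?thesis using G_mult[of u w] u w U4_A4 U4_closed[of u w] by (auto simp: KK_def)
  qed
qed

lemma KK_normal:
  fixes g k :: "'a::comm_ring_1 mat set"
  assumes g: "g \<in> carrier (A4 Mod HH)" and k: "k \<in> KK"
  shows "g \<otimes>\<^bsub>A4 Mod HH\<^esub> k \<otimes>\<^bsub>A4 Mod HH\<^esub> inv\<^bsub>A4 Mod HH\<^esub> g \<in> KK"
proof -
  obtain a where a: "a \<in> A4_carrier" "g = HH #>\<^bsub>A4\<^esub> a" using g G_carrier by auto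
  obtain u where u: "u \<in> U4_carrier" "k = HH #>\<^bsub>A4\<^esub> u" using k by (auto simp: KK_def)
  have uA: "u \<in> A4_carrier" using u U4_A4 by auto
  have ia: "inv\<^bsub>A4\<^esub> a \<in> A4_carrier" using A4_inv a by auto
  have "g \<otimes>\<^bsub>A4 Mod HH\<^esub> k \<otimes>\<^bsub>A4 Mod HH\<^esub> inv\<^bsub>A4 Mod HH\<^esub> g
      = HH #>\<^bsub>A4\<^esub> (a \<otimes>\<^bsub>A4\<^esub> u \<otimes>\<^bsub>A4\<^esub> inv\<^bsub>A4\<^esub> a)"
    using a u uA ia by (simp add: G_mult G_mult2 G_inv A4_closed)
  moreover have "a \<otimes>\<^bsub>A4\<^esub> u \<otimes>\<^bsub>A4\<^esub> inv\<^bsub>A4\<^esub> a \<in> U4_carrier"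
  proof -
    have nU: "U4_carrier \<lhd> (A4 :: 'a mat monoid)" by (rule normal_U4)
    then show ?thesis using a u unfolding group.normal_inv_iff[OF group_A4] by simp
  qed
  ultimately show ?thesis by (simp add: KK_def)
qed

lemma KK_comm:
  fixes k l :: "'a::comm_ring_1 mat set"
  assumes k: "k \<in> KK" and l: "l \<in> KK"
  shows "k \<otimes>\<^bsub>A4 Mod HH\<^esub> l = l \<otimes>\<^bsub>A4 Mod HH\<^esub> k"
proof -
  interpret A: group "A4 :: 'a mat monoid" by (rule group_A4)
  obtain u where u: "u \<in> U4_carrier" "k = HH #>\<^bsub>A4\<^esub> u" using k by (auto simp: KK_def)
  obtain w where w: "w \<in> U4_carrier" "l = HH #>\<^bsub>A4\<^esub> w" using l by (auto simp: KK_def)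
  have uA: "u \<in> carrier A4" and wA: "w \<in> carrier A4" using u w U4_A4 by auto
  define c where "c = u \<otimes>\<^bsub>A4\<^esub> w \<otimes>\<^bsub>A4\<^esub> inv\<^bsub>A4\<^esub> u \<otimes>\<^bsub>A4\<^esub> inv\<^bsub>A4\<^esub> w"
  have "c \<in> derived_set A4 U4_carrier" unfolding c_def using u w by blast
  then have cH: "c \<in> HH" unfolding HH_def derived_def by (rule generate.incl)
  have 1: "c \<otimes>\<^bsub>A4\<^esub> (w \<otimes>\<^bsub>A4\<^esub> u) = (u \<otimes>\<^bsub>A4\<^esub> w \<otimes>\<^bsub>A4\<^esub> inv\<^bsub>A4\<^esub> u) \<otimes>\<^bsub>A4\<^esub> (inv\<^bsub>A4\<^esub> w \<otimes>\<^bsub>A4\<^esub> (w \<otimes>\<^bsub>A4\<^esub> u))"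
    unfolding c_def using uA wA by (simp del: A4_simps add: A.m_assoc)
  have 2: "inv\<^bsub>A4\<^esub> w \<otimes>\<^bsub>A4\<^esub> (w \<otimes>\<^bsub>A4\<^esub> u) = u"
    using uA wA by (simp del: A4_simps add: A.m_assoc[symmetric])
  have 3: "u \<otimes>\<^bsub>A4\<^esub> w \<otimes>\<^bsub>A4\<^esub> inv\<^bsub>A4\<^esub> u \<otimes>\<^bsub>A4\<^esub> u = u \<otimes>\<^bsub>A4\<^esub> w"
    using uA wA by (simp del: A4_simps add: A.m_assoc)
  have "c \<otimes>\<^bsub>A4\<^esub> (w \<otimes>\<^bsub>A4\<^esub> u) = u \<otimes>\<^bsub>A4\<^esub> w" using 1 2 3 by simp
  then have "HH #>\<^bsub>A4\<^esub> (mat4_mult u w) = HH #>\<^bsub>A4\<^esub> (mat4_mult w u)"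
    using HH_absorb[OF cH, of "mat4_mult w u"] uA wA by (simp add: A4_closed)
  then show ?thesis using uA wA u w by (simp add: G_mult G_mult2)
qed

definition mm :: "'a::comm_ring_1 mat" where
  "mm = (\<lambda>i j. if i < 4 \<and> i = j then 1 else if (i = 0 \<and> j = 1) \<or> (i = 2 \<and> j = 3) then 1 else 0)"

lemma mm_U4: "mm \<in> U4_carrier"
  unfolding U4_iff by (auto simp: mm_def ut_def)

lemma mm_entries: "mm 0 1 = 1" "mm 2 3 = 1" "mm 1 1 = 1" "mm 2 2 = 1" "mm 0 0 = 1" "mm 3 3 = 1"
  by (auto simp: mm_def)

lemma alg1: assumes "- 1 + p + u + p * u = (- 1 + p + u) * u + p" shows "(u - 1) * (u - 1) = (0::'a::comm_ring_1)"
proof -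
  have "(u - 1) * (u - 1) = ((- 1 + p + u) * u + p) - (- 1 + p + u + p * u)" by (simp add: algebra_simps power2_eq_square)
  also have "\<dots> = 0" by (simp only: assms diff_self)
  finally show ?thesis .
qed

lemma alg2: assumes "v * (- v + r + 1) + r = v * r + (- v + r + 1)" shows "(v - 1) * (v - 1) = (0::'a::comm_ring_1)"
proof -
  have "(v - 1) * (v - 1) = (v * r + (- v + r + 1)) - (v * (- v + r + 1) + r)" by (simp add: algebra_simps power2_eq_square)
  then show ?thesis using assms by simp
qed

lemma key_entries:
  fixes a :: "'a::idom mat"
  assumes a: "a \<in> A4_carrier"
    and eq: "HH #>\<^bsub>A4\<^esub> (mat4_mult a (mat4_mult (mat4_mult mm a) (inv\<^bsub>A4\<^esub> mm)))
           = HH #>\<^bsub>A4\<^esub> (mat4_mult (mat4_mult (mat4_mult mm a) (inv\<^bsub>A4\<^esub> mm)) a)"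
  shows "a \<in> U4_carrier"
proof -
  define n where "n = inv\<^bsub>A4\<^esub> (mm :: 'a mat)"
  have mmU: "(mm :: 'a mat) \<in> U4_carrier" by (rule mm_U4)
  have mme: "(mm :: 'a mat) 0 1 = 1" "(mm :: 'a mat) 2 3 = 1" "(mm :: 'a mat) 1 1 = 1" "(mm :: 'a mat) 2 2 = 1"
    "(mm :: 'a mat) 0 0 = 1" "(mm :: 'a mat) 3 3 = 1" by (rule mm_entries)+
  have nU: "n \<in> U4_carrier" and n01: "n 0 1 = -1" and n23: "n 2 3 = -1"
    using U4_inv[OF mmU] mme by (auto simp: n_def)
  have nd: "n 0 0 = 1" "n 1 1 = 1" "n 2 2 = 1" "n 3 3 = 1" using nU by (auto simp: U4_iff)
  have mA: "(mm::'a mat) \<in> A4_carrier" and nA: "n \<in> A4_carrier" using mmU nU by (simp_all add: U4_A4')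
  define XX where "XX = mat4_mult (mat4_mult mm a) n"
  have maA: "mat4_mult mm a \<in> A4_carrier" using A4_closed mA a by blast
  have XA: "XX \<in> A4_carrier" using A4_closed maA nA by (simp add: XX_def)
  have e: "HH #>\<^bsub>A4\<^esub> (mat4_mult a XX) = HH #>\<^bsub>A4\<^esub> (mat4_mult XX a)" using eq by (simp add: XX_def n_def)
  have P: "mat4_mult a XX 0 1 = mat4_mult XX a 0 1" "mat4_mult a XX 2 3 = mat4_mult XX a 2 3"
    using coset_entries[OF A4_closed[OF a XA] A4_closed[OF XA a] e] by auto
  have Y01: "XX 0 1 = -1 + a 0 1 + a 1 1" and Y11: "XX 1 1 = a 1 1"
    and Y23: "XX 2 3 = - a 2 2 + a 2 3 + 1" and Y22: "XX 2 2 = a 2 2"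
    unfolding XX_def using A4_rules[OF maA nA] A4_rules[OF mA a] n01 n23 nd mme A4_corner[OF a] A4_corner[OF mA]
      A4_corner[OF maA] by (simp_all add: algebra_simps)
  have Y00: "XX 0 0 = 1" and Y33: "XX 3 3 = 1" using A4_corner[OF XA] by auto
  have E1: "(a 1 1 - 1) * (a 1 1 - 1) = 0"
  proof -
    have "XX 0 1 + a 0 1 * XX 1 1 = XX 0 1 * a 1 1 + a 0 1"
      using P(1) A4_rules[OF a XA] A4_rules[OF XA a] A4_corner[OF a] Y00 by simp
    then show ?thesis unfolding Y01 Y11 by (rule alg1)
  qed
  then have u: "a 1 1 = 1" by simp
  have E2: "(a 2 2 - 1) * (a 2 2 - 1) = 0"
  proof -
    have "a 2 2 * XX 2 3 + a 2 3 = XX 2 2 * a 2 3 + XX 2 3"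
      using P(2) A4_rules[OF a XA] A4_rules[OF XA a] A4_corner[OF a] Y33 by simp
    then show ?thesis unfolding Y23 Y22 by (rule alg2)
  qed
  then have v: "a 2 2 = 1" by simp
  show ?thesis using a u v by (simp add: A4_iff U4_iff)
qed


lemma carrier_U4: "carrier U4 = U4_carrier" by (simp add: U4_def)

lemma key_B:
  fixes B :: "'a::idom mat set set"
  assumes Bc: "B \<subseteq> carrier (A4 Mod HH)"
    and Bn: "\<And>g b. g \<in> carrier (A4 Mod HH) \<Longrightarrow> b \<in> B \<Longrightarrow> g \<otimes>\<^bsub>A4 Mod HH\<^esub> b \<otimes>\<^bsub>A4 Mod HH\<^esub> inv\<^bsub>A4 Mod HH\<^esub> g \<in> B"
    and Bab: "\<And>b c. b \<in> B \<Longrightarrow> c \<in> B \<Longrightarrow> b \<otimes>\<^bsub>A4 Mod HH\<^esub> c = c \<otimes>\<^bsub>A4 Mod HH\<^esub> b"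
  shows "B \<subseteq> KK"
proof
  fix b assume b: "b \<in> B"
  then have "b \<in> carrier (A4 Mod HH)" using Bc by blast
  then obtain a where a: "a \<in> A4_carrier" "b = HH #>\<^bsub>A4\<^esub> a" unfolding G_carrier by blast
  have mmU: "(mm :: 'a mat) \<in> U4_carrier" by (rule mm_U4)
  have mA: "(mm :: 'a mat) \<in> A4_carrier" using mmU by (rule U4_A4')
  have nA: "inv\<^bsub>A4\<^esub> (mm :: 'a mat) \<in> A4_carrier" using A4_inv(1)[OF mA] .
  define g where "g = HH #>\<^bsub>A4\<^esub> (mm :: 'a mat)"
  have g: "g \<in> carrier (A4 Mod HH)" unfolding G_carrier g_def using mA by blast
  define XX where "XX = mat4_mult (mat4_mult mm a) (inv\<^bsub>A4\<^esub> (mm :: 'a mat))"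
  have XA: "XX \<in> A4_carrier" unfolding XX_def using mA nA a by (simp add: A4_closed)
  have x: "g \<otimes>\<^bsub>A4 Mod HH\<^esub> b \<otimes>\<^bsub>A4 Mod HH\<^esub> inv\<^bsub>A4 Mod HH\<^esub> g = HH #>\<^bsub>A4\<^esub> XX"
    unfolding g_def XX_def a(2) using mA nA a by (simp add: G_mult G_mult2 G_inv A4_closed)
  have xB: "HH #>\<^bsub>A4\<^esub> XX \<in> B" using Bn[OF g b] x by simp
  have "b \<otimes>\<^bsub>A4 Mod HH\<^esub> (HH #>\<^bsub>A4\<^esub> XX) = (HH #>\<^bsub>A4\<^esub> XX) \<otimes>\<^bsub>A4 Mod HH\<^esub> b"
    using Bab[OF b xB] .
  then have "HH #>\<^bsub>A4\<^esub> (mat4_mult a XX) = HH #>\<^bsub>A4\<^esub> (mat4_mult XX a)"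
    unfolding a(2) using a XA by (simp add: G_mult G_mult2)
  then have "a \<in> U4_carrier" using key_entries[OF a(1)] unfolding XX_def by blast
  then show "b \<in> KK" unfolding KK_def a(2) by blast
qed

lemma main_KK: "characteristic_subgroup (KK :: 'a::idom mat set set) (A4 Mod (HH :: 'a mat set))"
  unfolding characteristic_subgroup_def
proof (intro conjI ballI KK_subgroup)
  fix \<phi> assume \<phi>: "\<phi> \<in> iso (A4 Mod (HH :: 'a mat set)) (A4 Mod (HH :: 'a mat set))"
  have hom: "\<phi> \<in> hom (A4 Mod (HH :: 'a mat set)) (A4 Mod (HH :: 'a mat set))"
    and bij: "bij_betw \<phi> (carrier (A4 Mod (HH :: 'a mat set))) (carrier (A4 Mod (HH :: 'a mat set)))"
    using \<phi> by (auto simp: iso_def)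
  interpret Gg: group "A4 Mod (HH :: 'a mat set)" by (rule G_group)
  interpret h: group_hom "A4 Mod (HH :: 'a mat set)" "A4 Mod (HH :: 'a mat set)" \<phi>
    by (rule group_hom.intro[OF G_group G_group]) (simp add: group_hom_axioms_def hom)
  have surj: "\<phi> ` carrier (A4 Mod (HH :: 'a mat set)) = carrier (A4 Mod (HH :: 'a mat set))"
    and inj: "inj_on \<phi> (carrier (A4 Mod (HH :: 'a mat set)))" using bij by (auto simp: bij_betw_def)
  have Kc: "(KK :: 'a mat set set) \<subseteq> carrier (A4 Mod (HH :: 'a mat set))" by (rule KK_carrier)
  have sub1: "\<phi> ` KK \<subseteq> (KK :: 'a mat set set)"
  proof (rule key_B)
    show "\<phi> ` KK \<subseteq> carrier (A4 Mod (HH :: 'a mat set))" using Kc by auto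
    show "g \<otimes>\<^bsub>A4 Mod (HH :: 'a mat set)\<^esub> b \<otimes>\<^bsub>A4 Mod (HH :: 'a mat set)\<^esub> inv\<^bsub>A4 Mod (HH :: 'a mat set)\<^esub> g \<in> \<phi> ` KK"
      if g: "g \<in> carrier (A4 Mod (HH :: 'a mat set))" and b: "b \<in> \<phi> ` KK" for g b
    proof -
      obtain k where k: "k \<in> KK" "b = \<phi> k" using b by blast
      obtain g0 where g0: "g0 \<in> carrier (A4 Mod (HH :: 'a mat set))" "g = \<phi> g0" using g surj by (metis imageE)
      have kc: "k \<in> carrier (A4 Mod (HH :: 'a mat set))" using k Kc by blast
      have "\<phi> (g0 \<otimes>\<^bsub>A4 Mod (HH :: 'a mat set)\<^esub> k \<otimes>\<^bsub>A4 Mod (HH :: 'a mat set)\<^esub> inv\<^bsub>A4 Mod (HH :: 'a mat set)\<^esub> g0) = g \<otimes>\<^bsub>A4 Mod (HH :: 'a mat set)\<^esub> b \<otimes>\<^bsub>A4 Mod (HH :: 'a mat set)\<^esub> inv\<^bsub>A4 Mod (HH :: 'a mat set)\<^esub> g"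
        using g0 kc k by (simp del: mult_FactGroup add: h.hom_mult h.hom_inv)
      moreover have "g0 \<otimes>\<^bsub>A4 Mod (HH :: 'a mat set)\<^esub> k \<otimes>\<^bsub>A4 Mod (HH :: 'a mat set)\<^esub> inv\<^bsub>A4 Mod (HH :: 'a mat set)\<^esub> g0 \<in> KK"
        using KK_normal[OF g0(1) k(1)] .
      ultimately show ?thesis by (metis image_eqI)
    qed
    show "b \<otimes>\<^bsub>A4 Mod (HH :: 'a mat set)\<^esub> c = c \<otimes>\<^bsub>A4 Mod (HH :: 'a mat set)\<^esub> b" if b: "b \<in> \<phi> ` KK" and c: "c \<in> \<phi> ` (KK :: 'a mat set set)" for b c
    proof -
      obtain k where k: "k \<in> KK" "b = \<phi> k" using b by blast
      obtain l where l: "l \<in> KK" "c = \<phi> l" using c by blast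
      have kc: "k \<in> carrier (A4 Mod (HH :: 'a mat set))" "l \<in> carrier (A4 Mod (HH :: 'a mat set))" using k l Kc by blast+
      have "b \<otimes>\<^bsub>A4 Mod (HH :: 'a mat set)\<^esub> c = \<phi> (k \<otimes>\<^bsub>A4 Mod (HH :: 'a mat set)\<^esub> l)" using k l kc by (simp del: mult_FactGroup add: h.hom_mult)
      also have "\<dots> = \<phi> (l \<otimes>\<^bsub>A4 Mod (HH :: 'a mat set)\<^esub> k)" using KK_comm[OF k(1) l(1)] by simp
      also have "\<dots> = c \<otimes>\<^bsub>A4 Mod (HH :: 'a mat set)\<^esub> b" using k l kc by (simp del: mult_FactGroup add: h.hom_mult)
      finally show ?thesis .
    qed
  qed
  have sub2: "{x \<in> carrier (A4 Mod (HH :: 'a mat set)). \<phi> x \<in> KK} \<subseteq> (KK :: 'a mat set set)"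
  proof (rule key_B)
    show "{x \<in> carrier (A4 Mod (HH :: 'a mat set)). \<phi> x \<in> KK} \<subseteq> carrier (A4 Mod (HH :: 'a mat set))" by blast
    show "g \<otimes>\<^bsub>A4 Mod (HH :: 'a mat set)\<^esub> b \<otimes>\<^bsub>A4 Mod (HH :: 'a mat set)\<^esub> inv\<^bsub>A4 Mod (HH :: 'a mat set)\<^esub> g \<in> {x \<in> carrier (A4 Mod (HH :: 'a mat set)). \<phi> x \<in> KK}"
      if g: "g \<in> carrier (A4 Mod (HH :: 'a mat set))" and b: "b \<in> {x \<in> carrier (A4 Mod (HH :: 'a mat set)). \<phi> x \<in> KK}" for g b
    proof -
      have bc: "b \<in> carrier (A4 Mod (HH :: 'a mat set))" and bK: "\<phi> b \<in> KK" using b by auto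
      have "\<phi> (g \<otimes>\<^bsub>A4 Mod (HH :: 'a mat set)\<^esub> b \<otimes>\<^bsub>A4 Mod (HH :: 'a mat set)\<^esub> inv\<^bsub>A4 Mod (HH :: 'a mat set)\<^esub> g) = \<phi> g \<otimes>\<^bsub>A4 Mod (HH :: 'a mat set)\<^esub> \<phi> b \<otimes>\<^bsub>A4 Mod (HH :: 'a mat set)\<^esub> inv\<^bsub>A4 Mod (HH :: 'a mat set)\<^esub> (\<phi> g)"
        using g bc by (simp del: mult_FactGroup add: h.hom_mult h.hom_inv)
      moreover have "\<phi> g \<otimes>\<^bsub>A4 Mod (HH :: 'a mat set)\<^esub> \<phi> b \<otimes>\<^bsub>A4 Mod (HH :: 'a mat set)\<^esub> inv\<^bsub>A4 Mod (HH :: 'a mat set)\<^esub> (\<phi> g) \<in> KK"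
        using KK_normal[OF h.hom_closed[OF g] bK] .
      ultimately show ?thesis using g bc by (simp del: mult_FactGroup)
    qed
    show "b \<otimes>\<^bsub>A4 Mod (HH :: 'a mat set)\<^esub> c = c \<otimes>\<^bsub>A4 Mod (HH :: 'a mat set)\<^esub> b"
      if b: "b \<in> {x \<in> carrier (A4 Mod (HH :: 'a mat set)). \<phi> x \<in> KK}" and c: "c \<in> {x \<in> carrier (A4 Mod (HH :: 'a mat set)). \<phi> x \<in> KK}" for b c
    proof -
      have bc: "b \<in> carrier (A4 Mod (HH :: 'a mat set))" "\<phi> b \<in> KK" "c \<in> carrier (A4 Mod (HH :: 'a mat set))" "\<phi> c \<in> KK" using b c by auto
      have "\<phi> (b \<otimes>\<^bsub>A4 Mod (HH :: 'a mat set)\<^esub> c) = \<phi> b \<otimes>\<^bsub>A4 Mod (HH :: 'a mat set)\<^esub> \<phi> c" using bc by (simp del: mult_FactGroup add: h.hom_mult)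
      also have "\<dots> = \<phi> c \<otimes>\<^bsub>A4 Mod (HH :: 'a mat set)\<^esub> \<phi> b" using KK_comm[OF bc(2) bc(4)] .
      also have "\<dots> = \<phi> (c \<otimes>\<^bsub>A4 Mod (HH :: 'a mat set)\<^esub> b)" using bc by (simp del: mult_FactGroup add: h.hom_mult)
      finally show ?thesis using inj bc by (meson Gg.m_closed inj_onD)
    qed
  qed
  show "\<phi> ` KK = KK"
  proof
    show "\<phi> ` KK \<subseteq> KK" by (rule sub1)
    show "KK \<subseteq> \<phi> ` KK"
    proof
      fix k assume k: "k \<in> (KK :: 'a mat set set)"
      then have "k \<in> \<phi> ` carrier (A4 Mod (HH :: 'a mat set))" using Kc surj by blast
      then obtain x where x: "x \<in> carrier (A4 Mod (HH :: 'a mat set))" "k = \<phi> x" by blast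
      then have "x \<in> KK" using sub2 k by blast
      then show "k \<in> \<phi> ` KK" using x by blast
    qed
  qed
qed

theorem mainTheorem10:
  shows "characteristic_subgroup
           ((\<lambda>u. derived U4 (carrier U4) #>\<^bsub>A4\<^esub> u) ` carrier (U4 :: (nat \<Rightarrow> nat \<Rightarrow> 'a::idom) monoid))
           (A4 Mod (derived U4 (carrier U4)))"
  unfolding HH_eq unfolding carrier_U4 using main_KK unfolding KK_def .

end
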